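(* Let $\Omega\subset\mathbb{C}^n$ be a bounded domain, let $\mathcal R$ and $\mathcal R'$ be quasi-free Hilbert modules over $A(\Omega)$ with generating sets $\{f_i\}_{i=1}^m$ and $\{g_i\}_{i=1}^m$, $1\le m<\infty$, and let $X:\mathcal R\to\mathcal R'$ be a module map. Then there exists $\Psi=(\psi_{ij})\in\mathrm{Hol}_m(\Omega)$ such that \[Xf_i=\sum_{j=1}^m\psi_{ij}g_j\quad\text{for }1\le i\le m.\]
   Context: $A(\Omega)$ is the closure, in the supremum norm on $\Omega$, of the set of functions holomorphic on some neighbourhood of $\overline\Omega$; $\ell^2_m$ is the $m$-dimensional Hilbert space and $\mathrm{Hol}_m(\Omega)$ is the space of holomorphic $\mathcal L(\ell^2_m)$-valued functions on $\Omega$ (holomorphic $m\times m$ matrix functions). A quasi-free Hilbert module of rank $m$ over $A(\Omega)$ is a Hilbert space $\mathcal R$ obtained as the completion of $A(\Omega)\otimes\ell^2_m$ (regarded as $\ell^2_m$-valued holomorphic functions on $\Omega$) with respect to an inner product such that: (1) for each $z\in\Omega$ evaluation at $z$ is bounded, with norm locally uniformly bounded in $z$; (2) $\|\varphi F\|_{\mathcal R}\le\|\varphi\|_{A(\Omega)}\|F\|_{\mathcal R}$; (3) if $(F_i)$ is Cauchy in $\mathcal R$-norm, then $F_i(z)\to0$ for all $z$ iff $\|F_i\|_{\mathcal R}\to0$. $A(\Omega)$ acts by multiplication. A generating set is $\{f_1,\dots,f_m\}\subset\mathcal R$ whose $A(\Omega)$-multiples span a dense subspace and whose localizations at each $z\in\Omega$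 form a basis of the localization $\mathcal R/\mathcal R_z$ ($\mathcal R_z$ the closure of $\{\varphi h:\varphi(z)=0\}$); then $\{f_i(z)\}$ is a basis of $\ell^2_m$ for each $z$. A module map is a bounded linear $X$ with $X(\varphi h)=\varphi X(h)$. In the identity $Xf_i=\sum_j\psi_{ij}g_j$ the right side means the function $z\mapsto\sum_j\psi_{ij}(z)g_j(z)$. *)

theory Defs
  imports "HOL-Analysis.Analysis"
begin

text \<open>Points of C^n are vectors of type complex^'n; l^2_m is complex^'m (Euclidean norm).\<close>

definition hol_sc :: "(complex^'n) set \<Rightarrow> (complex^'n \<Rightarrow> complex) \<Rightarrow> bool" where
  "hol_sc U f \<longleftrightarrow>
     (\<forall>z\<in>U. \<exists>D. (f has_derivative D) (at z) \<and> (\<forall>c x. D (c *s x) = c * D x))"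

definition hol_vec :: "(complex^'n) set \<Rightarrow> (complex^'n \<Rightarrow> complex^'m) \<Rightarrow> bool" where
  "hol_vec U f \<longleftrightarrow> (\<forall>i. hol_sc U (\<lambda>z. f z $ i))"

definition hol_mat :: "(complex^'n) set \<Rightarrow> (complex^'n \<Rightarrow> complex^'m^'m) \<Rightarrow> bool" where
  "hol_mat U F \<longleftrightarrow> (\<forall>i j. hol_sc U (\<lambda>z. F z $ i $ j))"

definition bounded_domain :: "(complex^'n) set \<Rightarrow> bool" where
  "bounded_domain \<Omega> \<longleftrightarrow> open \<Omega> \<and> connected \<Omega> \<and> bounded \<Omega> \<and> \<Omega> \<noteq> {}"

text \<open>The algebra A(Omega): uniform limits on Omega of functions holomorphic on some
  neighbourhood of the closure of Omega (values off Omega are irrelevant).\<close>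
definition alg_A :: "(complex^'n) set \<Rightarrow> (complex^'n \<Rightarrow> complex) set" where
  "alg_A \<Omega> = {\<phi>. \<exists>\<psi>::nat \<Rightarrow> complex^'n \<Rightarrow> complex.
       (\<forall>k. \<exists>U. open U \<and> closure \<Omega> \<subseteq> U \<and> hol_sc U (\<psi> k)) \<and>
       (\<forall>e>0. \<exists>N. \<forall>k\<ge>N. \<forall>z\<in>\<Omega>. norm (\<psi> k z - \<phi> z) < e)}"

definition normA :: "(complex^'n) set \<Rightarrow> (complex^'n \<Rightarrow> complex) \<Rightarrow> real" where
  "normA \<Omega> \<phi> = (SUP z\<in>\<Omega>. norm (\<phi> z))"

text \<open>Module action: multiplication by a scalar function, restricted to Omega
  (elements of the modules are functions on Omega, extended by 0 outside).\<close>
definition mult :: "(complex^'n) set \<Rightarrow> (complex^'n \<Rightarrow> complex) \<Rightarrow> (complex^'n \<Rightarrow> complex^'m)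
                    \<Rightarrow> (complex^'n \<Rightarrow> complex^'m)" where
  "mult \<Omega> \<phi> h = (\<lambda>z. if z \<in> \<Omega> then \<phi> z *s h z else 0)"

text \<open>A(Omega) tensor l^2_m, regarded as l^2_m-valued functions on Omega.\<close>
definition alg_tensor :: "(complex^'n) set \<Rightarrow> (complex^'n \<Rightarrow> complex^'m) set" where
  "alg_tensor \<Omega> = {h. \<exists>\<phi>::'m \<Rightarrow> complex^'n \<Rightarrow> complex. (\<forall>i. \<phi> i \<in> alg_A \<Omega>) \<and>
       h = (\<lambda>z. if z \<in> \<Omega> then (\<chi> i. \<phi> i z) else 0)}"

definition hnorm :: "(('n \<Rightarrow> 'm) \<Rightarrow> ('n \<Rightarrow> 'm) \<Rightarrow> complex) \<Rightarrow> ('n \<Rightarrow> 'm) \<Rightarrow> real" where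
  "hnorm ip f = sqrt (Re (ip f f))"

text \<open>A quasi-free Hilbert module of rank m over A(Omega): a Hilbert space (R, ip) of
  l^2_m-valued holomorphic functions on Omega (extended by 0 off Omega) which is the
  completion of A(Omega) tensor l^2_m, satisfying conditions (1)--(3).\<close>
definition quasi_free ::
  "(complex^'n) set \<Rightarrow> (complex^'n \<Rightarrow> complex^'m) set
     \<Rightarrow> ((complex^'n \<Rightarrow> complex^'m) \<Rightarrow> (complex^'n \<Rightarrow> complex^'m) \<Rightarrow> complex) \<Rightarrow> bool" where
  "quasi_free \<Omega> R ip \<longleftrightarrow>
     \<comment> \<open>R is a complex vector space of holomorphic functions on Omega, zero off Omega\<close>
     (\<forall>h\<in>R. hol_vec \<Omega> h \<and> (\<forall>z. z \<notin> \<Omega> \<longrightarrow> h z = 0)) \<and>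
     (\<lambda>z. 0) \<in> R \<and>
     (\<forall>f\<in>R. \<forall>g\<in>R. (\<lambda>z. f z + g z) \<in> R) \<and>
     (\<forall>f\<in>R. \<forall>a::complex. (\<lambda>z. a *s f z) \<in> R) \<and>
     \<comment> \<open>ip is an inner product on R\<close>
     (\<forall>f\<in>R. \<forall>g\<in>R. \<forall>h\<in>R. ip (\<lambda>z. f z + g z) h = ip f h + ip g h) \<and>
     (\<forall>f\<in>R. \<forall>h\<in>R. \<forall>a. ip (\<lambda>z. a *s f z) h = a * ip f h) \<and>
     (\<forall>f\<in>R. \<forall>g\<in>R. ip g f = cnj (ip f g)) \<and>
     (\<forall>f\<in>R. Im (ip f f) = 0 \<and> Re (ip f f) \<ge> 0) \<and>
     (\<forall>f\<in>R. ip f f = 0 \<longrightarrow> f = (\<lambda>z. 0)) \<and>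
     \<comment> \<open>completeness\<close>
     (\<forall>F::nat \<Rightarrow> (complex^'n \<Rightarrow> complex^'m). (\<forall>k. F k \<in> R) \<longrightarrow>
        (\<forall>e>0. \<exists>N. \<forall>k\<ge>N. \<forall>l\<ge>N. hnorm ip (\<lambda>z. F k z - F l z) < e) \<longrightarrow>
        (\<exists>h\<in>R. (\<lambda>k. hnorm ip (\<lambda>z. F k z - h z)) \<longlonglongrightarrow> 0)) \<and>
     \<comment> \<open>R is the completion of A(Omega) tensor l^2_m\<close>
     alg_tensor \<Omega> \<subseteq> R \<and>
     (\<forall>h\<in>R. \<forall>e>0. \<exists>p\<in>alg_tensor \<Omega>. hnorm ip (\<lambda>z. h z - p z) < e) \<and>
     \<comment> \<open>(1) evaluation bounded, locally uniformly in z\<close>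
     (\<forall>z\<in>\<Omega>. \<exists>r>0. \<exists>C. \<forall>w\<in>\<Omega> \<inter> ball z r. \<forall>h\<in>R. norm (h w) \<le> C * hnorm ip h) \<and>
     \<comment> \<open>(2) contractive module action\<close>
     (\<forall>\<phi>\<in>alg_A \<Omega>. \<forall>h\<in>R. mult \<Omega> \<phi> h \<in> R \<and>
        hnorm ip (mult \<Omega> \<phi> h) \<le> normA \<Omega> \<phi> * hnorm ip h) \<and>
     \<comment> \<open>(3)\<close>
     (\<forall>F::nat \<Rightarrow> (complex^'n \<Rightarrow> complex^'m). (\<forall>k. F k \<in> R) \<longrightarrow>
        (\<forall>e>0. \<exists>N. \<forall>k\<ge>N. \<forall>l\<ge>N. hnorm ip (\<lambda>z. F k z - F l z) < e) \<longrightarrow>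
        ((\<forall>z\<in>\<Omega>. (\<lambda>k. F k z) \<longlonglongrightarrow> 0) \<longleftrightarrow> (\<lambda>k. hnorm ip (F k)) \<longlonglongrightarrow> 0))"

definition loc_sub ::
  "(complex^'n) set \<Rightarrow> (complex^'n \<Rightarrow> complex^'m) set
     \<Rightarrow> ((complex^'n \<Rightarrow> complex^'m) \<Rightarrow> (complex^'n \<Rightarrow> complex^'m) \<Rightarrow> complex)
     \<Rightarrow> complex^'n \<Rightarrow> (complex^'n \<Rightarrow> complex^'m) set" where
  "loc_sub \<Omega> R ip z = {h\<in>R. \<forall>e>0. \<exists>k::nat. \<exists>\<phi>s hs.
      (\<forall>l<k. \<phi>s l \<in> alg_A \<Omega> \<and> \<phi>s l z = 0 \<and> hs l \<in> R) \<and>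
      hnorm ip (\<lambda>w. h w - (\<Sum>l<k. mult \<Omega> (\<phi>s l) (hs l) w)) < e}"

definition generating_set ::
  "(complex^'n) set \<Rightarrow> (complex^'n \<Rightarrow> complex^'m) set
     \<Rightarrow> ((complex^'n \<Rightarrow> complex^'m) \<Rightarrow> (complex^'n \<Rightarrow> complex^'m) \<Rightarrow> complex)
     \<Rightarrow> ('m \<Rightarrow> (complex^'n \<Rightarrow> complex^'m)) \<Rightarrow> bool" where
  "generating_set \<Omega> R ip f \<longleftrightarrow>
     (\<forall>i. f i \<in> R) \<and>
     \<comment> \<open>A(Omega)-multiples span a dense subspace\<close>
     (\<forall>h\<in>R. \<forall>e>0. \<exists>\<phi>::'m \<Rightarrow> complex^'n \<Rightarrow> complex. (\<forall>i. \<phi> i \<in> alg_A \<Omega>) \<and>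
         hnorm ip (\<lambda>w. h w - (\<Sum>i\<in>UNIV. mult \<Omega> (\<phi> i) (f i) w)) < e) \<and>
     \<comment> \<open>localizations at each z form a basis of R / R_z\<close>
     (\<forall>z\<in>\<Omega>.
        (\<forall>c::'m \<Rightarrow> complex. (\<lambda>w. \<Sum>i\<in>UNIV. c i *s f i w) \<in> loc_sub \<Omega> R ip z \<longrightarrow> (\<forall>i. c i = 0)) \<and>
        (\<forall>h\<in>R. \<exists>c::'m \<Rightarrow> complex. (\<lambda>w. h w - (\<Sum>i\<in>UNIV. c i *s f i w)) \<in> loc_sub \<Omega> R ip z))"

definition module_map ::
  "(complex^'n) set \<Rightarrow> (complex^'n \<Rightarrow> complex^'m) set
     \<Rightarrow> ((complex^'n \<Rightarrow> complex^'m) \<Rightarrow> (complex^'n \<Rightarrow> complex^'m) \<Rightarrow> complex)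
     \<Rightarrow> (complex^'n \<Rightarrow> complex^'m) set
     \<Rightarrow> ((complex^'n \<Rightarrow> complex^'m) \<Rightarrow> (complex^'n \<Rightarrow> complex^'m) \<Rightarrow> complex)
     \<Rightarrow> ((complex^'n \<Rightarrow> complex^'m) \<Rightarrow> (complex^'n \<Rightarrow> complex^'m)) \<Rightarrow> bool" where
  "module_map \<Omega> R ip R' ip' X \<longleftrightarrow>
     (\<forall>h\<in>R. X h \<in> R') \<and>
     (\<forall>f\<in>R. \<forall>g\<in>R. X (\<lambda>z. f z + g z) = (\<lambda>z. X f z + X g z)) \<and>
     (\<forall>f\<in>R. \<forall>a::complex. X (\<lambda>z. a *s f z) = (\<lambda>z. a *s X f z)) \<and>
     (\<exists>C. \<forall>h\<in>R. hnorm ip' (X h) \<le> C * hnorm ip h) \<and>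
     (\<forall>\<phi>\<in>alg_A \<Omega>. \<forall>h\<in>R. X (mult \<Omega> \<phi> h) = mult \<Omega> \<phi> (X h))"

end

theory Submission
  imports Defs
begin

lemma hol_sc_const: "hol_sc U (\<lambda>z. c)"
  unfolding hol_sc_def by (auto intro!: exI[of _ "\<lambda>x. 0"])

lemma hol_sc_add: "hol_sc U f \<Longrightarrow> hol_sc U g \<Longrightarrow> hol_sc U (\<lambda>z. f z + g z)"
  unfolding hol_sc_def
proof (intro ballI)
  fix z assume f: "\<forall>z\<in>U. \<exists>D. (f has_derivative D) (at z) \<and> (\<forall>c x. D (c *s x) = c * D x)"
    and g: "\<forall>z\<in>U. \<exists>D. (g has_derivative D) (at z) \<and> (\<forall>c x. D (c *s x) = c * D x)" and z: "z \<in> U"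
  from f z obtain Df where Df: "(f has_derivative Df) (at z)" "\<forall>c x. Df (c *s x) = c * Df x" by blast
  from g z obtain Dg where Dg: "(g has_derivative Dg) (at z)" "\<forall>c x. Dg (c *s x) = c * Dg x" by blast
  show "\<exists>D. ((\<lambda>z. f z + g z) has_derivative D) (at z) \<and> (\<forall>c x. D (c *s x) = c * D x)"
    by (rule exI[of _ "\<lambda>x. Df x + Dg x"]) (auto intro!: has_derivative_add Df Dg simp: Df Dg distrib_left)
qed

lemma hol_sc_mult: "hol_sc U f \<Longrightarrow> hol_sc U g \<Longrightarrow> hol_sc U (\<lambda>z. f z * g z)"
  unfolding hol_sc_def
proof (intro ballI)
  fix z assume f: "\<forall>z\<in>U. \<exists>D. (f has_derivative D) (at z) \<and> (\<forall>c x. D (c *s x) = c * D x)"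
    and g: "\<forall>z\<in>U. \<exists>D. (g has_derivative D) (at z) \<and> (\<forall>c x. D (c *s x) = c * D x)" and z: "z \<in> U"
  from f z obtain Df where Df: "(f has_derivative Df) (at z)" "\<forall>c x. Df (c *s x) = c * Df x" by blast
  from g z obtain Dg where Dg: "(g has_derivative Dg) (at z)" "\<forall>c x. Dg (c *s x) = c * Dg x" by blast
  show "\<exists>D. ((\<lambda>z. f z * g z) has_derivative D) (at z) \<and> (\<forall>c x. D (c *s x) = c * D x)"
  proof (rule exI[of _ "\<lambda>x. f z * Dg x + Df x * g z"], intro conjI allI)
    show "((\<lambda>z. f z * g z) has_derivative (\<lambda>x. f z * Dg x + Df x * g z)) (at z)"
      by (rule has_derivative_mult[OF Df(1) Dg(1)])
  qed (simp add: Df Dg algebra_simps)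
qed

lemma hol_sc_inverse: "hol_sc U f \<Longrightarrow> (\<forall>z\<in>U. f z \<noteq> 0) \<Longrightarrow> hol_sc U (\<lambda>z. inverse (f z))"
  unfolding hol_sc_def
proof (intro ballI)
  fix z assume f: "\<forall>z\<in>U. \<exists>D. (f has_derivative D) (at z) \<and> (\<forall>c x. D (c *s x) = c * D x)"
    and nz: "\<forall>z\<in>U. f z \<noteq> 0" and z: "z \<in> U"
  from f z obtain Df where Df: "(f has_derivative Df) (at z)" "\<forall>c x. Df (c *s x) = c * Df x" by blast
  show "\<exists>D. ((\<lambda>z. inverse (f z)) has_derivative D) (at z) \<and> (\<forall>c x. D (c *s x) = c * D x)"
  proof (rule exI[of _ "\<lambda>h. - (inverse (f z) * Df h * inverse (f z))"], intro conjI allI)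
    show "((\<lambda>z. inverse (f z)) has_derivative (\<lambda>h. - (inverse (f z) * Df h * inverse (f z)))) (at z)"
      by (rule Deriv.has_derivative_inverse[OF _ Df(1)]) (use nz z in auto)
  qed (simp add: Df algebra_simps)
qed

lemma hol_sc_divide: "hol_sc U f \<Longrightarrow> hol_sc U g \<Longrightarrow> (\<forall>z\<in>U. g z \<noteq> 0) \<Longrightarrow> hol_sc U (\<lambda>z. f z / g z)"
  using hol_sc_mult[OF _ hol_sc_inverse] by (simp add: divide_inverse)

lemma hol_sc_sum: "finite S \<Longrightarrow> (\<And>s. s \<in> S \<Longrightarrow> hol_sc U (F s)) \<Longrightarrow> hol_sc U (\<lambda>z. \<Sum>s\<in>S. F s z)"
  by (induction S rule: finite_induct) (auto intro: hol_sc_const hol_sc_add)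

lemma hol_sc_prod: "finite S \<Longrightarrow> (\<And>s. s \<in> S \<Longrightarrow> hol_sc U (F s)) \<Longrightarrow> hol_sc U (\<lambda>z. \<Prod>s\<in>S. F s z)"
  by (induction S rule: finite_induct) (auto intro: hol_sc_const hol_sc_mult)

lemma hol_sc_det:
  fixes M :: "complex^'n \<Rightarrow> complex^'m^'m"
  assumes "\<And>i j. hol_sc U (\<lambda>z. M z $ i $ j)"
  shows "hol_sc U (\<lambda>z. det (M z))"
  unfolding det_def
  by (intro hol_sc_sum hol_sc_mult hol_sc_const hol_sc_prod assms) (auto simp: finite_permutations)


lemma qf_zero: "quasi_free \<Omega> R ip \<Longrightarrow> (\<lambda>z. 0) \<in> R"
  unfolding quasi_free_def by (elim conjE) assumption

lemma qf_add: assumes "quasi_free \<Omega> R ip" "f \<in> R" "g \<in> R" shows "(\<lambda>z. f z + g z) \<in> R"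
proof -
  have "\<forall>f\<in>R. \<forall>g\<in>R. (\<lambda>z. f z + g z) \<in> R" using assms(1) unfolding quasi_free_def by (elim conjE) assumption
  then show ?thesis using assms by blast
qed

lemma qf_scale: assumes "quasi_free \<Omega> R ip" "f \<in> R" shows "(\<lambda>z. a *s f z) \<in> R"
proof -
  have "\<forall>f\<in>R. \<forall>a::complex. (\<lambda>z. a *s f z) \<in> R" using assms(1) unfolding quasi_free_def by (elim conjE) assumption
  then show ?thesis using assms by blast
qed

lemma qf_tensor: "quasi_free \<Omega> R ip \<Longrightarrow> alg_tensor \<Omega> \<subseteq> R"
  unfolding quasi_free_def by (elim conjE) assumption

lemma qf_mult: assumes "quasi_free \<Omega> R ip" shows "\<forall>\<phi>\<in>alg_A \<Omega>. \<forall>h\<in>R. mult \<Omega> \<phi> h \<in> R"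
proof -
  have "\<forall>\<phi>\<in>alg_A \<Omega>. \<forall>h\<in>R. mult \<Omega> \<phi> h \<in> R \<and>
        hnorm ip (mult \<Omega> \<phi> h) \<le> normA \<Omega> \<phi> * hnorm ip h"
    using assms unfolding quasi_free_def by (elim conjE) assumption
  then show ?thesis by blast
qed

lemma gs_mem: "generating_set \<Omega> R ip f \<Longrightarrow> f i \<in> R"
  unfolding generating_set_def by (elim conjE) simp

lemma gs_loc:
  fixes f :: "'m \<Rightarrow> (complex^'n \<Rightarrow> complex^'m)"
  assumes "generating_set \<Omega> R ip f" "z \<in> \<Omega>" "h \<in> R"
  shows "\<exists>c::'m \<Rightarrow> complex. (\<lambda>w. h w - (\<Sum>i\<in>UNIV. c i *s f i w)) \<in> loc_sub \<Omega> R ip z"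
proof -
  have "\<forall>z\<in>\<Omega>.
        (\<forall>c::'m \<Rightarrow> complex. (\<lambda>w. \<Sum>i\<in>UNIV. c i *s f i w) \<in> loc_sub \<Omega> R ip z \<longrightarrow> (\<forall>i. c i = 0)) \<and>
        (\<forall>h\<in>R. \<exists>c::'m \<Rightarrow> complex. (\<lambda>w. h w - (\<Sum>i\<in>UNIV. c i *s f i w)) \<in> loc_sub \<Omega> R ip z)"
    using assms(1) unfolding generating_set_def by (elim conjE) assumption
  then show ?thesis using assms(2,3) by blast
qed

lemma qf_sum_in:
  fixes k :: nat
  assumes "quasi_free \<Omega> R ip" "\<forall>l<k. F l \<in> R"
  shows "(\<lambda>w. \<Sum>l<k. F l w) \<in> R"
  using assms(2)
proof (induction k)
  case 0 then show ?case using qf_zero[OF assms(1)] by simp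
next
  case (Suc k)
  then have "(\<lambda>w. (\<Sum>l<k. F l w) + F k w) \<in> R" by (intro qf_add[OF assms(1)]) auto
  then show ?case by simp
qed

lemma qf_diff_in:
  assumes "quasi_free \<Omega> R ip" "f \<in> R" "g \<in> R"
  shows "(\<lambda>w. f w - g w) \<in> R"
proof -
  have "(\<lambda>w. (-1) *s g w) \<in> R" using qf_scale[OF assms(1,3)] .
  then have "(\<lambda>w. f w + (-1) *s g w) \<in> R" using qf_add[OF assms(1,2)] by blast
  moreover have "(\<lambda>w. f w + (-1) *s g w) = (\<lambda>w. f w - g w)"
    by (auto simp: vec_eq_iff)
  ultimately show ?thesis by simp
qed

lemma loc_zero:
  assumes qf: "quasi_free \<Omega> R ip" and z: "z \<in> \<Omega>" and h: "h \<in> loc_sub \<Omega> R ip z"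
  shows "h z = 0"
proof -
  have E: "\<forall>z\<in>\<Omega>. \<exists>r>0. \<exists>C. \<forall>w\<in>\<Omega> \<inter> ball z r. \<forall>h\<in>R. norm (h w) \<le> C * hnorm ip h"
    using qf unfolding quasi_free_def by (elim conjE) assumption
  from E z obtain r C where r: "r > 0" and C: "\<forall>w\<in>\<Omega> \<inter> ball z r. \<forall>h\<in>R. norm (h w) \<le> C * hnorm ip h"
    by blast
  have Cz: "\<forall>h\<in>R. norm (h z) \<le> C * hnorm ip h" using C z r by auto
  have hR: "h \<in> R" using h unfolding loc_sub_def by blast
  have bound: "norm (h z) \<le> max C 0 * e" if e: "e > 0" for e
  proof -
    from h e obtain k :: nat and \<phi>s hs where
      H: "\<forall>l<k. \<phi>s l \<in> alg_A \<Omega> \<and> \<phi>s l z = 0 \<and> hs l \<in> R"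
      and N: "hnorm ip (\<lambda>w. h w - (\<Sum>l<k. mult \<Omega> (\<phi>s l) (hs l) w)) < e"
      unfolding loc_sub_def by blast
    let ?p = "\<lambda>w. \<Sum>l<k. mult \<Omega> (\<phi>s l) (hs l) w"
    have M: "\<forall>\<phi>\<in>alg_A \<Omega>. \<forall>h\<in>R. mult \<Omega> \<phi> h \<in> R" using qf_mult[OF qf] .
    have "\<forall>l<k. mult \<Omega> (\<phi>s l) (hs l) \<in> R" using H M by blast
    then have pR: "?p \<in> R" by (rule qf_sum_in[OF qf])
    have pz: "?p z = 0" using H z by (simp add: mult_def)
    have dR: "(\<lambda>w. h w - ?p w) \<in> R" by (rule qf_diff_in[OF qf hR pR])
    have "norm (h z) = norm ((\<lambda>w. h w - ?p w) z)" using pz by simp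
    also have "\<dots> \<le> C * hnorm ip (\<lambda>w. h w - ?p w)" using Cz[rule_format, OF dR] by simp
    also have "\<dots> \<le> max C 0 * hnorm ip (\<lambda>w. h w - ?p w)"
    proof (rule mult_right_mono)
      have "\<forall>f\<in>R. Im (ip f f) = 0 \<and> Re (ip f f) \<ge> 0" using qf unfolding quasi_free_def by (elim conjE) assumption
      then show "0 \<le> hnorm ip (\<lambda>w. h w - ?p w)" using dR by (auto simp: hnorm_def)
    qed simp
    also have "\<dots> \<le> max C 0 * e"
      using N by (intro mult_left_mono) auto
    finally show ?thesis .
  qed
  have "norm (h z) = 0"
  proof (rule ccontr)
    assume "norm (h z) \<noteq> 0"
    then have pos: "norm (h z) > 0" by simp
    define e where "e = norm (h z) / (2 * (max C 0 + 1))"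
    have ep: "e > 0" unfolding e_def using pos by (auto intro!: divide_pos_pos)
    have "norm (h z) \<le> max C 0 * e" by (rule bound[OF ep])
    also have "\<dots> < norm (h z)"
    proof -
      have "max C 0 * e \<le> (max C 0 + 1) * e" using ep by (intro mult_right_mono) auto
      also have "\<dots> = norm (h z) / 2"
      proof -
        have "max C 0 + 1 > 0" by simp
        then show ?thesis unfolding e_def by (simp add: field_simps)
      qed
      finally show ?thesis using pos by linarith
    qed
    finally show False by simp
  qed
  then show ?thesis by simp
qed

lemma const_in_alg_A: "(\<lambda>w. c) \<in> alg_A \<Omega>"
  unfolding alg_A_def
  apply (rule CollectI, rule exI[of _ "\<lambda>k w. c"], intro conjI allI)
   apply (rule exI[of _ UNIV], simp add: hol_sc_const)
  apply auto
  done

lemma qf_span: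
  fixes g :: "'b \<Rightarrow> (complex^'a \<Rightarrow> complex^'b)"
  assumes qf: "quasi_free \<Omega> R ip" and gs: "generating_set \<Omega> R ip g" and z: "z \<in> \<Omega>"
  shows "\<exists>c. v = (\<Sum>i\<in>UNIV. c i *s g i z)"
proof -
  let ?h = "\<lambda>w. if w \<in> \<Omega> then (\<chi> i. (\<lambda>w. v $ i) w) else 0"
  have "?h \<in> alg_tensor \<Omega>" unfolding alg_tensor_def
    by (rule CollectI, rule exI[of _ "\<lambda>i w. v $ i"]) (auto intro: const_in_alg_A)
  then have hR: "?h \<in> R" using qf_tensor[OF qf] by blast
  obtain c where c: "(\<lambda>w. ?h w - (\<Sum>i\<in>UNIV. c i *s g i w)) \<in> loc_sub \<Omega> R ip z"
    using gs_loc[OF gs z hR] by blast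
  have "?h z - (\<Sum>i\<in>UNIV. c i *s g i z) = 0" using loc_zero[OF qf z c] by simp
  then show ?thesis using z by (auto simp: vec_eq_iff)
qed


theorem lemma5:
  fixes \<Omega> :: "(complex^'n) set"
    and R R' :: "(complex^'n \<Rightarrow> complex^'m) set"
    and ip ip' :: "(complex^'n \<Rightarrow> complex^'m) \<Rightarrow> (complex^'n \<Rightarrow> complex^'m) \<Rightarrow> complex"
    and f g :: "'m \<Rightarrow> (complex^'n \<Rightarrow> complex^'m)"
    and X :: "(complex^'n \<Rightarrow> complex^'m) \<Rightarrow> (complex^'n \<Rightarrow> complex^'m)"
  assumes "bounded_domain \<Omega>"
    and "quasi_free \<Omega> R ip" and "quasi_free \<Omega> R' ip'"
    and "generating_set \<Omega> R ip f" and "generating_set \<Omega> R' ip' g"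
    and "module_map \<Omega> R ip R' ip' X"
  shows "\<exists>\<Psi> :: complex^'n \<Rightarrow> complex^'m^'m. hol_mat \<Omega> \<Psi> \<and>
           (\<forall>i. \<forall>z\<in>\<Omega>. X (f i) z = (\<Sum>j\<in>UNIV. \<Psi> z $ i $ j *s g j z))"
proof -
  note qf' = assms(3) and gs' = assms(5)
  define A :: "complex^'n \<Rightarrow> complex^'m^'m" where "A z = (\<chi> a b. g b z $ a)" for z
  define B where "B i z = X (f i) z" for i z
  define \<Psi> :: "complex^'n \<Rightarrow> complex^'m^'m" where
    "\<Psi> z = (\<chi> i k. det (\<chi> a b. if b = k then B i z $ a else A z $ a $ b) / det (A z))" for z
  have fR: "f i \<in> R" for i using gs_mem[OF assms(4)] .
  have gR: "g j \<in> R'" for j using gs_mem[OF gs'] .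
  have XR0: "\<forall>h\<in>R. X h \<in> R'" using assms(6) unfolding module_map_def by (elim conjE) assumption
  have XR: "X h \<in> R'" if "h \<in> R" for h using XR0 that by blast
  have hol': "hol_vec \<Omega> h" if "h \<in> R'" for h
  proof -
    have "\<forall>h\<in>R'. hol_vec \<Omega> h \<and> (\<forall>z. z \<notin> \<Omega> \<longrightarrow> h z = 0)"
      using qf' unfolding quasi_free_def by (elim conjE) assumption
    then show ?thesis using that by blast
  qed
  have holA: "hol_sc \<Omega> (\<lambda>z. A z $ a $ b)" for a b
    using hol'[OF gR[of b]] unfolding A_def hol_vec_def by simp
  have holB: "hol_sc \<Omega> (\<lambda>z. B i z $ a)" for i a
    using hol'[OF XR[OF fR[of i]]] unfolding B_def hol_vec_def by simp
  have holIf: "hol_sc \<Omega> (\<lambda>z. if P then B i z $ a else A z $ a $ b)" for P i a b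
    by (cases P) (simp_all add: holA holB)
  have colA: "A z *v x = (\<Sum>j\<in>UNIV. x $ j *s g j z)" for z x
    by (simp add: matrix_mult_sum column_def A_def)
  have detnz: "det (A z) \<noteq> 0" if z: "z \<in> \<Omega>" for z
  proof -
    have "surj (\<lambda>x. A z *v x)"
    unfolding surj_def
    proof
      fix v
      obtain c where "v = (\<Sum>i\<in>UNIV. c i *s g i z)" using qf_span[OF qf' gs' z] by blast
      then show "\<exists>x. v = A z *v x" by (intro exI[of _ "\<chi> i. c i"]) (simp add: colA)
    qed
    then have "invertible (A z)"
      unfolding invertible_right_inverse matrix_right_invertible_surjective .
    then show ?thesis by (simp add: invertible_det_nz)
  qed
  show ?thesis
  proof (intro exI[of _ \<Psi>] conjI allI ballI)
    show "hol_mat \<Omega> \<Psi>"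
      unfolding hol_mat_def \<Psi>_def
      by (auto intro!: hol_sc_divide hol_sc_det holIf holA detnz)
  next
    fix i z assume z: "z \<in> \<Omega>"
    have "A z *v (\<Psi> z $ i) = B i z"
      using cramer[OF detnz[OF z], of "\<Psi> z $ i" "B i z"] by (simp add: \<Psi>_def)
    then show "X (f i) z = (\<Sum>j\<in>UNIV. \<Psi> z $ i $ j *s g j z)"
      by (simp add: colA B_def)
  qed
qed

end
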